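(* In the BICM setting described in the context, with message $1$ transmitted and $\mathsf D$ the ORBGRAND metric, for any $w'\ne1$ and any $\theta<0$, almost surely $$\lim_{N\to\infty}\frac1N\ln\mathbb E\big\{e^{N\theta\mathsf D(w')}\,\big|\,\underline{\mathsf T}\big\}=m\int_0^1\ln\big(1+e^{\frac\theta m t}\big)\,\mathrm dt-m\ln2.$$
   Context: Let $m\ge1$, let $\mathcal S$ be a constellation with $|\mathcal S|=2^m$, and let $\mu:\{+1,-1\}^m\to\mathcal S$ be a bijective labeling. For $s\in\mathcal S$, let $b_j(s)$ be the $j$-th coordinate of $\mu^{-1}(s)$. The channel is memoryless with output space $\mathbb R^d$ (norm $|\cdot|$) and transition densities $p(y\mid s)$. For $j=1,\dots,m$ define $$q_j^\pm(y)=2^{-(m-1)}\sum_{s:\,b_j(s)=\pm1}p(y\mid s).$$ For each $j$, let $\mathsf X_j$ be uniform on $\{\pm1\}$ and let $\mathsf Y$ have density $q_j^{\mathsf X_j}$ given $\mathsf X_j$. Let $\Psi_j$ be the CDF of $|\ln(q_j^+(\mathsf Y)/q_j^-(\mathsf Y))|$, and let $\bar\Psi=\frac1m\sum_j\Psi_j$. Assume that for each $j$: (A1) there exist $M_1>0$, $a>0$ and a polynomial $S_1$ with $q_j^\pm(y)<S_1(|y|)e^{-a|y|}$ for $|y|>M_1$; (A2) there exist $M_2>0$ and a polynomial $S_2$ with $|\ln(q_j^+(y)/q_j^-(y))|<S_2(|y|)$ for $|y|>M_2$; (A3) $\Psi_j$, $\Psi_j^{-1}$, $\bar\Psi$ and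 $\bar\Psi^{-1}$ are smooth with finite first, second and third derivatives. Random coding: the codebook has $\lceil e^{NR}\rceil$ codewords, each consisting of bits $\mathsf X_{i,j}(w)$, $i\le N$, $j\le m$, all i.i.d. uniform on $\{\pm1\}$. Message $1$ is transmitted. Symbol $i$ is $s_i(1)=\mu(\mathsf X_{i,1}(1),\dots,\mathsf X_{i,m}(1))$, and the outputs $\mathsf Y_i$ are conditionally independent with densities $p(\cdot\mid s_i(1))$. Let $\mathsf T_{i,j}=\ln(q_j^+(\mathsf Y_i)/q_j^-(\mathsf Y_i))$, and let $\underline{\mathsf T}$ be the collection of all $\mathsf T_{i,j}$. Let $\mathsf R_{i,j}$ be the rank of $|\mathsf T_{i,j}|$ among all $mN$ values (rank $1$ is the smallest). Let $\mathrm{sgn}(t)=1$ if $t\ge0$ and $-1$ otherwise. The ORBGRAND metric is $$\mathsf D(w)=\frac1{mN}\sum_{i,j}\frac{\mathsf R_{i,j}}{mN}\mathbf 1\big(\mathrm{sgn}(\mathsf T_{i,j})\mathsf X_{i,j}(w)<0\big).$$ *)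

theory Defs
  imports "HOL-Probability.Probability" "HOL-Computational_Algebra.Polynomial"
begin

definition bitvecs :: "nat \<Rightarrow> int list set" where
  "bitvecs m = {xs. length xs = m \<and> set xs \<subseteq> {-1, 1}}"

definition labbit :: "(int list \<Rightarrow> 's) \<Rightarrow> nat \<Rightarrow> 's \<Rightarrow> nat \<Rightarrow> int" where
  "labbit \<mu> m s j = (inv_into (bitvecs m) \<mu> s) ! j"

definition qfun :: "'s set \<Rightarrow> (int list \<Rightarrow> 's) \<Rightarrow> nat \<Rightarrow> ('s \<Rightarrow> 'y \<Rightarrow> real)
    \<Rightarrow> nat \<Rightarrow> int \<Rightarrow> 'y \<Rightarrow> real" where
  "qfun S \<mu> m p j b y = (1/2) ^ (m - 1) * (\<Sum>s\<in>{s\<in>S. labbit \<mu> m s j = b}. p s y)"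

definition llr :: "'s set \<Rightarrow> (int list \<Rightarrow> 's) \<Rightarrow> nat \<Rightarrow> ('s \<Rightarrow> 'y \<Rightarrow> real)
    \<Rightarrow> nat \<Rightarrow> 'y \<Rightarrow> real" where
  "llr S \<mu> m p j y = ln (qfun S \<mu> m p j 1 y / qfun S \<mu> m p j (-1) y)"

text \<open>Psi_j: CDF of |llr_j(Y)| where Y has density (q_j^+ + q_j^-)/2
  (i.e. X_j uniform, Y given X_j with density q_j^{X_j}).\<close>
definition Psi :: "'s set \<Rightarrow> (int list \<Rightarrow> 's) \<Rightarrow> nat \<Rightarrow> ('s \<Rightarrow> 'y::euclidean_space \<Rightarrow> real)
    \<Rightarrow> nat \<Rightarrow> real \<Rightarrow> real" where
  "Psi S \<mu> m p j t = (\<integral>y. indicator {y. \<bar>llr S \<mu> m p j y\<bar> \<le> t} y *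
       ((qfun S \<mu> m p j 1 y + qfun S \<mu> m p j (-1) y) / 2) \<partial>lborel)"

definition Psibar :: "'s set \<Rightarrow> (int list \<Rightarrow> 's) \<Rightarrow> nat \<Rightarrow> ('s \<Rightarrow> 'y::euclidean_space \<Rightarrow> real)
    \<Rightarrow> real \<Rightarrow> real" where
  "Psibar S \<mu> m p t = (1 / real m) * (\<Sum>j<m. Psi S \<mu> m p j t)"

definition smooth_on :: "real set \<Rightarrow> (real \<Rightarrow> real) \<Rightarrow> bool" where
  "smooth_on U f \<longleftrightarrow> (\<forall>k. \<forall>x\<in>U. ((deriv ^^ k) f) differentiable (at x))"

definition smooth_cdf :: "(real \<Rightarrow> real) \<Rightarrow> bool" where
  "smooth_cdf F \<longleftrightarrow> bij_betw F {0..} {0..<1} \<and> smooth_on {0<..} F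
      \<and> smooth_on {0<..<1} (inv_into {0..} F)"

definition sgnp :: "real \<Rightarrow> int" where
  "sgnp t = (if t \<ge> 0 then 1 else -1)"

text \<open>Rank of |T i j| among all m*N values (rank 1 = smallest); ties broken by
  lexicographic order of the index pair, so ranks form a permutation of 1..mN.\<close>
definition rnk :: "nat \<Rightarrow> nat \<Rightarrow> (nat \<Rightarrow> nat \<Rightarrow> real) \<Rightarrow> nat \<Rightarrow> nat \<Rightarrow> nat" where
  "rnk N m T i j = card {(i', j'). i' < N \<and> j' < m \<and>
      (\<bar>T i' j'\<bar> < \<bar>T i j\<bar> \<or> (\<bar>T i' j'\<bar> = \<bar>T i j\<bar> \<and> (i' < i \<or> (i' = i \<and> j' \<le> j))))}"

definition orb_metric :: "nat \<Rightarrow> nat \<Rightarrow> (nat \<Rightarrow> nat \<Rightarrow> real) \<Rightarrow> (nat \<Rightarrow> nat \<Rightarrow> int) \<Rightarrow> real" where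
  "orb_metric N m T Xw = (1 / (real m * real N)) *
     (\<Sum>i<N. \<Sum>j<m. (real (rnk N m T i j) / (real m * real N)) *
        (if sgnp (T i j) * Xw i j < 0 then 1 else 0))"

definition Tsigma :: "'a measure \<Rightarrow> nat \<Rightarrow> nat \<Rightarrow> (nat \<Rightarrow> 'a \<Rightarrow> 'y) \<Rightarrow> (nat \<Rightarrow> 'y \<Rightarrow> real)
    \<Rightarrow> 'a measure" where
  "Tsigma M N m Y L = sigma (space M)
     (\<Union>i\<in>{..<N}. \<Union>j\<in>{..<m}. {(\<lambda>x. L j (Y i x)) -` A \<inter> space M | A. A \<in> sets borel})"

definition csize :: "real \<Rightarrow> nat \<Rightarrow> nat" where
  "csize R N = nat \<lceil>exp (real N * R)\<rceil>"

end

theory Submission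
  imports Defs
begin


definition lek :: "(nat \<Rightarrow> nat \<Rightarrow> real) \<Rightarrow> nat \<times> nat \<Rightarrow> nat \<times> nat \<Rightarrow> bool" where
  "lek T k k' = (\<bar>T (fst k) (snd k)\<bar> < \<bar>T (fst k') (snd k')\<bar> \<or>
     (\<bar>T (fst k) (snd k)\<bar> = \<bar>T (fst k') (snd k')\<bar> \<and> (fst k < fst k' \<or> (fst k = fst k' \<and> snd k \<le> snd k'))))"

lemma lek_trans: "lek T a b \<Longrightarrow> lek T b c \<Longrightarrow> lek T a c"
  unfolding lek_def by auto
lemma lek_total: "lek T a b \<or> lek T b a"
  unfolding lek_def by auto
lemma lek_antisym: "lek T a b \<Longrightarrow> lek T b a \<Longrightarrow> a = b"
  unfolding lek_def by (cases a; cases b) auto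
lemma lek_refl: "lek T a a"
  unfolding lek_def by auto

lemma rnk_eq: "rnk N m T i j = card {k \<in> {..<N} \<times> {..<m}. lek T k (i,j)}"
  unfolding rnk_def lek_def by (rule arg_cong[where f=card]) auto

lemma rnk_bij:
  "bij_betw (\<lambda>k. rnk N m T (fst k) (snd k)) ({..<N} \<times> {..<m}) {1..m*N}"
proof -
  let ?K = "{..<N} \<times> {..<m}"
  let ?f = "\<lambda>k. rnk N m T (fst k) (snd k)"
  have fk: "?f k = card {k' \<in> ?K. lek T k' k}" for k using rnk_eq[of N m T "fst k" "snd k"] by simp
  have less: "?f a < ?f b" if "a \<in> ?K" "b \<in> ?K" "lek T a b" "a \<noteq> b" for a b
  proof -
    have "{k' \<in> ?K. lek T k' a} \<subset> {k' \<in> ?K. lek T k' b}"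
      using that lek_trans[of T _ a b] lek_antisym[of T a b] lek_refl[of T b] by blast
    then show ?thesis unfolding fk by (intro psubset_card_mono) auto
  qed
  have inj: "inj_on ?f ?K"
  proof (rule inj_onI)
    fix a b assume "a \<in> ?K" "b \<in> ?K" "?f a = ?f b"
    then show "a = b" using less[of a b] less[of b a] lek_total[of T a b] by fastforce
  qed
  have sub: "?f ` ?K \<subseteq> {1..m*N}"
  proof
    fix r assume "r \<in> ?f ` ?K"
    then obtain k where k: "k \<in> ?K" "r = ?f k" by blast
    have "k \<in> {k' \<in> ?K. lek T k' k}" using k lek_refl by blast
    then have "card {k' \<in> ?K. lek T k' k} \<ge> 1"
      by (metis (no_types, lifting) One_nat_def Suc_leI card_gt_0_iff empty_iff finite_SigmaI finite_lessThan finite_subset mem_Collect_eq subsetI)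
    moreover have "card {k' \<in> ?K. lek T k' k} \<le> card ?K" by (intro card_mono) auto
    ultimately show "r \<in> {1..m*N}" using k fk by (simp add: card_cartesian_product mult.commute)
  qed
  have "card (?f ` ?K) = card {1..m*N}" using inj by (simp add: card_image card_cartesian_product)
  then have "?f ` ?K = {1..m*N}" using sub by (intro card_subset_eq) auto
  then show ?thesis using inj by (simp add: bij_betw_def)
qed


lemma orb_metric_K:
  "orb_metric N m T Z = (\<Sum>k\<in>{..<N} \<times> {..<m}. (1 / (real m * real N)) *
      ((real (rnk N m T (fst k) (snd k)) / (real m * real N)) *
        (if sgnp (T (fst k) (snd k)) * Z (fst k) (snd k) < 0 then 1 else 0)))"
  unfolding orb_metric_def sum_distrib_left sum.cartesian_product by (simp add: case_prod_beta)

lemma orb_metric_cong: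
  assumes "\<And>i j. i < N \<Longrightarrow> j < m \<Longrightarrow> Z i j = Z' i j"
  shows "orb_metric N m T Z = orb_metric N m T Z'"
  unfolding orb_metric_def using assms by (intro arg_cong2[where f="(*)"] refl sum.cong) auto

lemma sum_sgn: "(\<Sum>v\<in>{-1::int, 1}. (if sgnp t * v < 0 then e else 1)) = 1 + (e::real)"
  unfolding sgnp_def by auto

lemma sumZ:
  assumes N: "N > 0" and m: "m > 0"
  shows "(\<Sum>z\<in>PiE ({..<N} \<times> {..<m}) (\<lambda>_. {-1::int, 1}).
            exp (real N * \<theta> * orb_metric N m T (\<lambda>i j. z (i, j))))
       = (\<Prod>r\<in>{1..m*N}. (1 + exp (\<theta> * real r / (real m * (real m * real N)))))"
proof -
  let ?K = "{..<N} \<times> {..<m}"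
  define a where "a k = \<theta> * real (rnk N m T (fst k) (snd k)) / (real m * (real m * real N))" for k
  define F where "F k v = (if sgnp (T (fst k) (snd k)) * v < 0 then exp (a k) else (1::real))" for k v
  have e: "exp (real N * \<theta> * orb_metric N m T (\<lambda>i j. z (i, j))) = (\<Prod>k\<in>?K. F k (z k))" for z
  proof -
    have "real N * \<theta> * orb_metric N m T (\<lambda>i j. z (i, j)) =
       (\<Sum>k\<in>?K. a k * (if sgnp (T (fst k) (snd k)) * z k < 0 then 1 else 0))"
      unfolding orb_metric_K sum_distrib_left
      by (intro sum.cong refl) (use N m in \<open>auto simp: a_def field_simps\<close>)
    then show ?thesis by (simp add: exp_sum F_def if_distrib cong: if_cong)
  qed
  have "(\<Sum>z\<in>PiE ?K (\<lambda>_. {-1::int, 1}). exp (real N * \<theta> * orb_metric N m T (\<lambda>i j. z (i, j))))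
      = (\<Sum>z\<in>PiE ?K (\<lambda>_. {-1::int, 1}). \<Prod>k\<in>?K. F k (z k))" by (simp add: e)
  also have "\<dots> = (\<Prod>k\<in>?K. \<Sum>v\<in>{-1::int, 1}. F k v)"
    by (rule prod_sum_PiE[symmetric]) auto
  also have "\<dots> = (\<Prod>k\<in>?K. 1 + exp (a k))" unfolding F_def sum_sgn ..
  also have "\<dots> = (\<Prod>r\<in>{1..m*N}. (1 + exp (\<theta> * real r / (real m * (real m * real N)))))"
    unfolding a_def by (rule prod.reindex_bij_betw[OF rnk_bij, where g = "\<lambda>r. 1 + exp (\<theta> * real r / (real m * (real m * real N)))"])
  finally show ?thesis .
qed




lemma integral_split_n:
  fixes h :: "real \<Rightarrow> real"
  assumes c: "continuous_on UNIV h" and n: "n > 0" and kn: "k \<le> n"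
  shows "integral {0..real k / real n} h = (\<Sum>r<k. integral {real r / real n..real (Suc r) / real n} h)"
  using kn
proof (induction k)
  case 0 then show ?case by simp
next
  case (Suc k)
  have "integral {0..real k / real n} h + integral {real k / real n..real (Suc k) / real n} h
      = integral {0..real (Suc k) / real n} h"
    by (rule Henstock_Kurzweil_Integration.integral_combine) (use n in \<open>auto simp: divide_right_mono intro!: integrable_continuous_interval continuous_on_subset[OF c]\<close>)
  then show ?case using Suc by simp
qed

lemma riemann_bound:
  fixes h :: "real \<Rightarrow> real"
  assumes c: "continuous_on UNIV h" and mono: "\<And>x y. x \<le> y \<Longrightarrow> h y \<le> h x" and n: "n > 0"
  shows "\<bar>(\<Sum>r\<in>{1..n}. h (real r / real n)) / real n - integral {0..1} h\<bar> \<le> (h 0 - h 1) / real n"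
proof -
  define I where "I r = integral {real r / real n..real (Suc r) / real n} h" for r
  have int: "integral {0..1} h = (\<Sum>r<n. I r)"
    using integral_split_n[OF c n, of n] n by (simp add: I_def)
  have bnd: "h (real (Suc r) / real n) / real n \<le> I r \<and> I r \<le> h (real r / real n) / real n" for r
  proof -
    have le: "real r / real n \<le> real (Suc r) / real n" using n by (simp add: divide_right_mono)
    have ii: "h integrable_on {real r / real n..real (Suc r) / real n}"
      by (intro integrable_continuous_interval continuous_on_subset[OF c]) auto
    have cont: "Henstock_Kurzweil_Integration.content {real r / real n..real (Suc r) / real n} = 1 / real n"
      using le n by (simp add: field_simps)
    have "integral {real r / real n..real (Suc r) / real n} (\<lambda>_. h (real (Suc r) / real n)) \<le> I r"
      unfolding I_def by (rule integral_le[OF _ ii]) (auto intro: mono)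
    moreover have "I r \<le> integral {real r / real n..real (Suc r) / real n} (\<lambda>_. h (real r / real n))"
      unfolding I_def by (rule integral_le[OF ii]) (auto intro: mono)
    ultimately show ?thesis using cont by simp
  qed
  have s1: "(\<Sum>r\<in>{1..n}. h (real r / real n)) = (\<Sum>r<n. h (real (Suc r) / real n))"
    by (simp add: sum.atLeast1_atMost_eq)
  have lo: "(\<Sum>r<n. h (real (Suc r) / real n) / real n) \<le> (\<Sum>r<n. I r)"
    by (rule sum_mono) (use bnd in auto)
  have hi: "(\<Sum>r<n. I r) \<le> (\<Sum>r<n. h (real r / real n) / real n)"
    by (rule sum_mono) (use bnd in auto)
  have tel: "(\<Sum>r<n. h (real r / real n)) - (\<Sum>r<n. h (real (Suc r) / real n)) = h 0 - h 1"
    using sum_lessThan_telescope[of "\<lambda>r. h (real r / real n)" n] n by (simp add: sum_subtractf)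
  define A where "A = (\<Sum>r<n. h (real (Suc r) / real n))"
  define B where "B = (\<Sum>r<n. h (real r / real n))"
  have lo': "A / real n \<le> integral {0..1} h" using lo int by (simp add: A_def sum_divide_distrib)
  have hi': "integral {0..1} h \<le> B / real n" using hi int by (simp add: B_def sum_divide_distrib)
  have "B / real n = A / real n + (h 0 - h 1) / real n" using tel
    by (simp add: A_def B_def add_divide_distrib[symmetric])
  moreover have S: "(\<Sum>r\<in>{1..n}. h (real r / real n)) = A" using s1 by (simp add: A_def)
  moreover have "h 1 \<le> h 0" using mono[of 0 1] by simp
  ultimately show ?thesis using lo' hi' unfolding S by (simp add: abs_le_iff)
qed

lemma riemann_lim:
  fixes h :: "real \<Rightarrow> real"
  assumes c: "continuous_on UNIV h" and mono: "\<And>x y. x \<le> y \<Longrightarrow> h y \<le> h x" and m: "m > 0"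
  shows "(\<lambda>N. (\<Sum>r\<in>{1..m*N}. h (real r / real (m*N))) / real (m*N)) \<longlonglongrightarrow> integral {0..1} h"
proof -
  let ?f = "\<lambda>N. (\<Sum>r\<in>{1..m*N}. h (real r / real (m*N))) / real (m*N) - integral {0..1} h"
  have "eventually (\<lambda>N. norm (?f N) \<le> (h 0 - h 1) / real N) sequentially"
    using eventually_gt_at_top[of 0]
  proof eventually_elim
    case (elim N)
    then have "m * N > 0" using m by simp
    from riemann_bound[OF c mono this]
    have "norm (?f N) \<le> (h 0 - h 1) / real (m*N)" by simp
    also have "\<dots> \<le> (h 0 - h 1) / real N"
      using m elim mono[of 0 1] by (intro divide_left_mono) (auto simp: mult_pos_pos)
    finally show ?case .
  qed
  moreover have "(\<lambda>N. (h 0 - h 1) / real N) \<longlonglongrightarrow> 0" by (rule lim_const_over_n)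
  ultimately have "?f \<longlonglongrightarrow> 0" by (rule Lim_null_comparison)
  then show ?thesis by (simp add: LIM_zero_iff)
qed


lemma const_lim:
  assumes m: "m > 0" and th: "\<theta> \<le> 0"
  shows "(\<lambda>N. ln ((1/2) ^ (N*m) * (\<Prod>r\<in>{1..m*N}. (1 + exp (\<theta> * real r / (real m * (real m * real N)))))) / real N)
    \<longlonglongrightarrow> real m * integral {0..1} (\<lambda>t. ln (1 + exp (\<theta> / real m * t))) - real m * ln 2"
proof -
  define h where "h t = ln (1 + exp (\<theta> / real m * t))" for t
  have c: "continuous_on UNIV h" unfolding h_def
    by (intro continuous_intros) (auto, smt (verit) exp_gt_zero)
  have mono: "h y \<le> h x" if "x \<le> y" for x y
  proof -
    have "\<theta> / real m * y \<le> \<theta> / real m * x" using that th m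
      by (intro mult_left_mono_neg) (auto simp: divide_nonpos_pos)
    then show ?thesis unfolding h_def by (simp add: add_pos_nonneg)
  qed
  have L: "(\<lambda>N. real m * ((\<Sum>r\<in>{1..m*N}. h (real r / real (m*N))) / real (m*N)) - real m * ln 2)
      \<longlonglongrightarrow> real m * integral {0..1} h - real m * ln 2"
    by (intro tendsto_intros riemann_lim[OF c mono m])
  have eq: "ln ((1/2) ^ (N*m) * (\<Prod>r\<in>{1..m*N}. (1 + exp (\<theta> * real r / (real m * (real m * real N)))))) / real N
      = real m * ((\<Sum>r\<in>{1..m*N}. h (real r / real (m*N))) / real (m*N)) - real m * ln 2" if N: "N > 0" for N
  proof -
    have pos: "0 < (\<Prod>r\<in>{1..m*N}. (1 + exp (\<theta> * real r / (real m * (real m * real N)))))"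
      by (intro prod_pos) (auto simp: add_pos_nonneg)
    have "ln ((1/2) ^ (N*m) * (\<Prod>r\<in>{1..m*N}. (1 + exp (\<theta> * real r / (real m * (real m * real N))))))
       = real (N*m) * ln (1/2) + (\<Sum>r\<in>{1..m*N}. ln (1 + exp (\<theta> * real r / (real m * (real m * real N)))))"
    proof -
      have lp: "ln (\<Prod>r\<in>{1..m*N}. (1 + exp (\<theta> * real r / (real m * (real m * real N)))))
         = (\<Sum>r\<in>{1..m*N}. ln (1 + exp (\<theta> * real r / (real m * (real m * real N)))))"
        by (rule ln_prod) (auto, smt (verit) exp_gt_zero)
      have "ln ((1/2) ^ (N*m) * (\<Prod>r\<in>{1..m*N}. (1 + exp (\<theta> * real r / (real m * (real m * real N))))))
         = ln ((1/2) ^ (N*m)) + ln (\<Prod>r\<in>{1..m*N}. (1 + exp (\<theta> * real r / (real m * (real m * real N)))))"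
      proof -
        have "\<And>P::real. P > 0 \<Longrightarrow> ln ((1/2)^(N*m) * P) = ln ((1/2)^(N*m)) + ln P"
          by (simp add: ln_mult)
        from this[OF pos] show ?thesis .
      qed
      also have "ln ((1/2::real) ^ (N*m)) = real (N*m) * ln (1/2)" by (rule ln_realpow)
      finally show ?thesis unfolding lp .

    qed
    also have "(\<Sum>r\<in>{1..m*N}. ln (1 + exp (\<theta> * real r / (real m * (real m * real N)))))
       = (\<Sum>r\<in>{1..m*N}. h (real r / real (m*N)))"
      unfolding h_def by (intro sum.cong refl) (simp add: field_simps)
    finally show ?thesis using N m by (simp add: ln_div field_simps)
  qed
  show ?thesis unfolding h_def[symmetric]
    by (rule Lim_transform_eventually[OF L], rule eventually_mono[OF eventually_gt_at_top[of 0]], rule eq[symmetric])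
qed




lemma sets_Collect_lessThan_All:
  fixes N :: nat
  assumes "\<And>i. i < N \<Longrightarrow> {x\<in>space M. P i x} \<in> sets M"
  shows "{x\<in>space M. \<forall>i<N. P i x} \<in> sets M"
proof -
  have "{x\<in>space M. \<forall>i<N. P i x} = {x\<in>space M. \<forall>i\<in>{..<N}. P i x}" by auto
  also have "\<dots> \<in> sets M" by (rule sets.sets_Collect_finite_All) (use assms in auto)
  finally show ?thesis .
qed

lemma rect_indep:
  fixes M :: "'a measure" and Xn :: "nat \<Rightarrow> nat \<Rightarrow> nat \<Rightarrow> 'a \<Rightarrow> int"
    and Yn :: "nat \<Rightarrow> 'a \<Rightarrow> 'y::euclidean_space"
    and Gf :: "(nat \<Rightarrow> nat \<Rightarrow> int) \<Rightarrow> (nat \<Rightarrow> 'y set) \<Rightarrow> ennreal"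
  assumes prob: "prob_space M"
    and Xm: "\<And>w i j. Xn w i j \<in> measurable M (count_space UNIV)"
    and Ym: "\<And>i. Yn i \<in> borel_measurable M"
    and law: "\<And>b A. (\<forall>w\<in>{1..C}. \<forall>i<N. \<forall>j<m. b w i j \<in> {-1, 1}) \<Longrightarrow>
               (\<forall>i<N. A i \<in> sets lborel) \<Longrightarrow>
               emeasure M {x \<in> space M. (\<forall>w\<in>{1..C}. \<forall>i<N. \<forall>j<m. Xn w i j x = b w i j)
                                       \<and> (\<forall>i<N. Yn i x \<in> A i)}
               = ennreal ((1/2) ^ (C * N * m)) * Gf (b 1) A"
    and Gone: "\<And>b1. (\<forall>i<N. \<forall>j<m. b1 i j \<in> {-1, 1}) \<Longrightarrow> Gf b1 (\<lambda>_. UNIV) = 1"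
    and w': "1 \<le> w'" "w' \<le> C" "w' \<noteq> 1"
    and z: "z \<in> PiE ({..<N} \<times> {..<m}) (\<lambda>_. {-1::int, 1})"
    and A: "\<forall>i<N. A i \<in> sets lborel"
  shows "measure M ({x\<in>space M. \<forall>i<N. \<forall>j<m. Xn w' i j x = z (i, j)} \<inter> {x\<in>space M. \<forall>i<N. Yn i x \<in> A i})
         = (1/2) ^ (N * m) * measure M {x\<in>space M. \<forall>i<N. Yn i x \<in> A i}"
proof -
  interpret prob_space M by (rule prob)
  define D where "D = {1..C} \<times> {..<N} \<times> {..<m}"
  define okb where "okb b \<longleftrightarrow> (\<forall>w\<in>{1..C}. \<forall>i<N. \<forall>j<m. b w i j \<in> {-1::int, 1})" for b
  define Bf where "Bf = {b. okb b \<and> (\<forall>w i j. \<not> (w\<in>{1..C} \<and> i<N \<and> j<m) \<longrightarrow> b w i j = 0)}"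
  define LS where "LS b B = {x \<in> space M. (\<forall>w\<in>{1..C}. \<forall>i<N. \<forall>j<m. Xn w i j x = b w i j)
                                       \<and> (\<forall>i<N. Yn i x \<in> B i)}" for b B
  define Rect where "Rect B = {x\<in>space M. \<forall>i<N. Yn i x \<in> B i}" for B
  define Good where "Good = {x\<in>space M. \<forall>w\<in>{1..C}. \<forall>i<N. \<forall>j<m. Xn w i j x \<in> {-1, 1}}"
  define Ez where "Ez z = {x\<in>space M. \<forall>i<N. \<forall>j<m. Xn w' i j x = z (i, j)}" for z :: "nat \<times> nat \<Rightarrow> int"
  define Zs where "Zs = PiE ({..<N} \<times> {..<m}) (\<lambda>_. {-1::int, 1})"
  define c where "c = ennreal ((1/2) ^ (C * N * m))"
  have Xset: "{x\<in>space M. Xn w i j x = v} \<in> sets M" for w i j v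
  proof -
    have "{x\<in>space M. Xn w i j x = v} = Xn w i j -` {v} \<inter> space M" by auto
    then show ?thesis using measurable_sets[OF Xm, of "{v}"] by simp
  qed
  have Xset2: "{x\<in>space M. Xn w i j x \<in> V} \<in> sets M" for w i j V
  proof -
    have "{x\<in>space M. Xn w i j x \<in> V} = Xn w i j -` V \<inter> space M" by auto
    then show ?thesis using measurable_sets[OF Xm, of V] by simp
  qed
  have Yset: "{x\<in>space M. Yn i x \<in> B} \<in> sets M" if "B \<in> sets lborel" for i B
  proof -
    have "{x\<in>space M. Yn i x \<in> B} = Yn i -` B \<inter> space M" by auto
    then show ?thesis using measurable_sets[OF Ym, of B] that by simp
  qed
  have Rect_sets: "Rect B \<in> sets M" if "\<forall>i<N. B i \<in> sets lborel" for B
    unfolding Rect_def by (rule sets_Collect_lessThan_All) (use Yset that in auto)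
  have Xone: "{x\<in>space M. P (Xn w i j x)} \<in> sets M" for P w i j
    using Xset2[of w i j "{v. P v}"] by simp
  have Xall: "{x\<in>space M. \<forall>i<N. \<forall>j<m. P i j (Xn (w i j) i j x)} \<in> sets M" for P w
  proof -
    have "{x\<in>space M. \<forall>j<m. P i j (Xn (w i j) i j x)} \<in> sets M" for i
      by (rule sets_Collect_lessThan_All) (rule Xone)
    then show ?thesis by (rule sets_Collect_lessThan_All)
  qed
  have Ez_sets: "Ez z \<in> sets M" for z
    unfolding Ez_def by (intro sets_Collect_lessThan_All Xone)
  have XCall: "{x\<in>space M. \<forall>w\<in>{1..C}. \<forall>i<N. \<forall>j<m. P w i j (Xn w i j x)} \<in> sets M" for P
  proof (rule sets.sets_Collect_finite_All)
    fix w show "{x\<in>space M. \<forall>i<N. \<forall>j<m. P w i j (Xn w i j x)} \<in> sets M"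
      by (rule sets_Collect_lessThan_All, rule sets_Collect_lessThan_All, rule Xone)
  qed simp
  have Good_sets: "Good \<in> sets M" unfolding Good_def by (rule XCall)
  have LS_sets: "LS b B \<in> sets M" if "\<forall>i<N. B i \<in> sets lborel" for b B
  proof -
    have "LS b B = {x\<in>space M. \<forall>w\<in>{1..C}. \<forall>i<N. \<forall>j<m. Xn w i j x = b w i j} \<inter> Rect B"
      unfolding LS_def Rect_def by auto
    also have "\<dots> \<in> sets M" by (rule sets.Int[OF XCall Rect_sets[OF that]])
    finally show ?thesis .
  qed
  define \<Phi> where "\<Phi> \<beta> = (\<lambda>w i j. if (w, i, j) \<in> D then \<beta> (w, i, j) else (0::int))" for \<beta>
  define \<Psi> where "\<Psi> b = restrict (\<lambda>(w, i, j). b w i j) D" for b :: "nat \<Rightarrow> nat \<Rightarrow> nat \<Rightarrow> int"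
  have bijB: "bij_betw \<Phi> (PiE D (\<lambda>_. {-1::int, 1})) Bf"
  proof (rule bij_betw_byWitness[where f' = \<Psi>])
    show "\<forall>a\<in>PiE D (\<lambda>_. {-1::int, 1}). \<Psi> (\<Phi> a) = a"
    proof
      fix a assume a: "a \<in> PiE D (\<lambda>_. {-1::int, 1})"
      show "\<Psi> (\<Phi> a) = a"
      proof
        fix k :: "nat \<times> nat \<times> nat"
        obtain w i j where k: "k = (w, i, j)" by (cases k) auto
        show "\<Psi> (\<Phi> a) k = a k"
        proof (cases "k \<in> D")
          case True then show ?thesis unfolding \<Psi>_def \<Phi>_def k by simp
        next
          case False then show ?thesis unfolding \<Psi>_def using PiE_arb[OF a False] by simp
        qed
      qed
    qed
    show "\<forall>a'\<in>Bf. \<Phi> (\<Psi> a') = a'"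
    proof
      fix b assume b: "b \<in> Bf"
      show "\<Phi> (\<Psi> b) = b"
      proof (intro ext)
        fix w i j
        show "\<Phi> (\<Psi> b) w i j = b w i j"
        proof (cases "(w, i, j) \<in> D")
          case True then show ?thesis unfolding \<Psi>_def \<Phi>_def by simp
        next
          case False then show ?thesis using b unfolding \<Phi>_def Bf_def D_def by auto
        qed
      qed
    qed
    show "\<Phi> ` PiE D (\<lambda>_. {-1::int, 1}) \<subseteq> Bf"
    proof
      fix b assume "b \<in> \<Phi> ` PiE D (\<lambda>_. {-1::int, 1})"
      then obtain a where a: "a \<in> PiE D (\<lambda>_. {-1::int, 1})" and b: "b = \<Phi> a" by blast
      have "a k \<in> {-1, 1}" if "k \<in> D" for k using a that by (auto simp: PiE_iff)
      then show "b \<in> Bf" unfolding b Bf_def okb_def \<Phi>_def D_def by auto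
    qed
    show "\<Psi> ` Bf \<subseteq> PiE D (\<lambda>_. {-1::int, 1})"
    proof
      fix a assume "a \<in> \<Psi> ` Bf"
      then obtain b where b: "b \<in> Bf" and a: "a = \<Psi> b" by blast
      show "a \<in> PiE D (\<lambda>_. {-1::int, 1})"
        unfolding a \<Psi>_def PiE_iff using b by (auto simp: Bf_def okb_def D_def)
    qed
  qed
  have finD: "finite D" unfolding D_def by auto
  have finBf: "finite Bf" using bijB finD by (metis bij_betw_finite finite_PiE finite.emptyI finite.insertI)
  have cardBf: "card Bf = 2 ^ (C * N * m)"
  proof -
    have "card Bf = card (PiE D (\<lambda>_. {-1::int, 1}))" using bijB by (metis bij_betw_same_card)
    also have "\<dots> = 2 ^ card D" using finD by (simp add: card_PiE numeral_2_eq_2)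
    also have "card D = C * N * m" unfolding D_def by (simp add: card_cartesian_product)
    finally show ?thesis .
  qed
  have Bf_ok: "b \<in> Bf \<Longrightarrow> okb b" for b unfolding Bf_def by auto
  have disjLS: "disjoint_family_on (\<lambda>b. LS b B) Bf" for B
    unfolding disjoint_family_on_def
  proof (intro ballI impI)
    fix b b' assume b: "b \<in> Bf" "b' \<in> Bf" "b \<noteq> b'"
    then obtain w i j where "b w i j \<noteq> b' w i j" by (auto simp: fun_eq_iff)
    moreover from this b have "w \<in> {1..C} \<and> i < N \<and> j < m" unfolding Bf_def by force
    ultimately show "LS b B \<inter> LS b' B = {}" unfolding LS_def by force
  qed
  have LSUNIV: "(\<lambda>_. UNIV) = (\<lambda>_. UNIV) \<and> (\<forall>i<N. (UNIV :: 'y set) \<in> sets lborel)" by simp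
  have Good_eq: "Good = (\<Union>b\<in>Bf. LS b (\<lambda>_. UNIV))"
  proof
    show "Good \<subseteq> (\<Union>b\<in>Bf. LS b (\<lambda>_. UNIV))"
    proof
      fix x assume x: "x \<in> Good"
      let ?b = "\<Phi> (restrict (\<lambda>(w, i, j). Xn w i j x) D)"
      have "?b \<in> Bf" using x by (auto simp: \<Phi>_def Bf_def okb_def D_def Good_def)
      moreover have "x \<in> LS ?b (\<lambda>_. UNIV)" using x by (auto simp: \<Phi>_def LS_def D_def Good_def)
      ultimately show "x \<in> (\<Union>b\<in>Bf. LS b (\<lambda>_. UNIV))" by blast
    qed
    show "(\<Union>b\<in>Bf. LS b (\<lambda>_. UNIV)) \<subseteq> Good"
      using Bf_ok by (force simp: LS_def Good_def okb_def)
  qed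
  have lawLS: "emeasure M (LS b B) = c * Gf (b 1) B" if "b \<in> Bf" "\<forall>i<N. B i \<in> sets lborel" for b B
    unfolding LS_def c_def by (rule law) (use Bf_ok[OF that(1)] that(2) in \<open>auto simp: okb_def\<close>)
  have b1ok: "\<forall>i<N. \<forall>j<m. b 1 i j \<in> {-1, 1}" if "b \<in> Bf" for b
    using Bf_ok[OF that] w' unfolding okb_def by auto
  have "emeasure M Good = (\<Sum>b\<in>Bf. emeasure M (LS b (\<lambda>_. UNIV)))"
    unfolding Good_eq by (rule sum_emeasure[symmetric]) (use LS_sets disjLS finBf in auto)
  also have "\<dots> = (\<Sum>b\<in>Bf. c)"
  proof (intro sum.cong refl)
    fix b assume b: "b \<in> Bf"
    have "emeasure M (LS b (\<lambda>_. UNIV)) = c * Gf (b 1) (\<lambda>_. UNIV)" by (rule lawLS[OF b]) simp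
    also have "Gf (b 1) (\<lambda>_. UNIV) = 1" by (rule Gone[OF b1ok[OF b]])
    finally show "emeasure M (LS b (\<lambda>_. UNIV)) = c" by simp
  qed
  also have "\<dots> = ennreal (real (card Bf) * (1/2)^(C*N*m))" unfolding c_def
    by (simp add: ennreal_mult ennreal_of_nat_eq_real_of_nat)
  also have "real (card Bf) * (1/2)^(C*N*m) = 1" unfolding cardBf by (simp add: power_one_over)
  finally have "emeasure M Good = 1" by simp
  then have AEgood: "AE x in M. x \<in> Good"
    using AE_in_set_eq_1[OF Good_sets] by (simp add: emeasure_eq_measure)
  define Fib where "Fib z = {b\<in>Bf. \<forall>i<N. \<forall>j<m. b w' i j = z (i, j)}" for z :: "nat \<times> nat \<Rightarrow> int"
  have w'C: "w' \<in> {1..C}" using w' by auto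
  have Fib_sub: "Fib z \<subseteq> Bf" for z unfolding Fib_def by auto
  have fib_eq: "Ez z \<inter> Rect A \<inter> Good = (\<Union>b\<in>Fib z. LS b A)" for z
  proof
    show "Ez z \<inter> Rect A \<inter> Good \<subseteq> (\<Union>b\<in>Fib z. LS b A)"
    proof
      fix x assume x: "x \<in> Ez z \<inter> Rect A \<inter> Good"
      let ?b = "\<Phi> (restrict (\<lambda>(w, i, j). Xn w i j x) D)"
      have "?b \<in> Bf" using x by (auto simp: \<Phi>_def Bf_def okb_def D_def Good_def)
      moreover have "\<forall>i<N. \<forall>j<m. ?b w' i j = z (i, j)" using x w'C by (auto simp: \<Phi>_def D_def Ez_def)
      moreover have "x \<in> LS ?b A" using x by (auto simp: \<Phi>_def LS_def D_def Good_def Rect_def)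
      ultimately show "x \<in> (\<Union>b\<in>Fib z. LS b A)" unfolding Fib_def by blast
    qed
    show "(\<Union>b\<in>Fib z. LS b A) \<subseteq> Ez z \<inter> Rect A \<inter> Good"
    proof
      fix x assume "x \<in> (\<Union>b\<in>Fib z. LS b A)"
      then obtain b where b: "b \<in> Fib z" "x \<in> LS b A" by blast
      have ok: "okb b" using b Fib_sub Bf_ok by blast
      have "x \<in> Ez z" using b w'C unfolding Fib_def LS_def Ez_def by auto
      moreover have "x \<in> Rect A" using b unfolding LS_def Rect_def by auto
      moreover have "x \<in> Good" using b ok unfolding LS_def Good_def okb_def by auto
      ultimately show "x \<in> Ez z \<inter> Rect A \<inter> Good" by blast
    qed
  qed
  have finFib: "finite (Fib z)" for z using finBf Fib_sub by (rule finite_subset[rotated])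
  have em_fib: "emeasure M (Ez z \<inter> Rect A \<inter> Good) = (\<Sum>b\<in>Fib z. c * Gf (b 1) A)" for z
  proof -
    have "emeasure M (Ez z \<inter> Rect A \<inter> Good) = (\<Sum>b\<in>Fib z. emeasure M (LS b A))"
      unfolding fib_eq
      by (rule sum_emeasure[symmetric]) (use LS_sets A disjoint_family_on_mono[OF Fib_sub disjLS] finFib in auto)
    also have "\<dots> = (\<Sum>b\<in>Fib z. c * Gf (b 1) A)"
      by (intro sum.cong refl lawLS) (use Fib_sub A in auto)
    finally show ?thesis .
  qed
  have pm: "v \<in> {-1::int, 1} \<Longrightarrow> v * v = 1" for v by auto
  have sym: "(\<Sum>b\<in>Fib z1. c * Gf (b 1) A) = (\<Sum>b\<in>Fib z2. c * Gf (b 1) A)"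
    if z1: "z1 \<in> Zs" and z2: "z2 \<in> Zs" for z1 z2
  proof -
    have z1v: "z1 (i, j) \<in> {-1, 1}" if "i < N" "j < m" for i j using z1 that unfolding Zs_def by auto
    have z2v: "z2 (i, j) \<in> {-1, 1}" if "i < N" "j < m" for i j using z2 that unfolding Zs_def by auto
    define \<sigma> where "\<sigma> b = (\<lambda>w i j. if w = w' \<and> i < N \<and> j < m then b w i j * z1 (i, j) * z2 (i, j) else b w i j)"
      for b :: "nat \<Rightarrow> nat \<Rightarrow> nat \<Rightarrow> int"
    have \<sigma>\<sigma>: "\<sigma> (\<sigma> b) = b" for b
    proof (intro ext)
      fix w i j
      show "\<sigma> (\<sigma> b) w i j = b w i j"
      proof (cases "w = w' \<and> i < N \<and> j < m")
        case True
        then have "z1 (i, j) * z1 (i, j) = 1" "z2 (i, j) * z2 (i, j) = 1" using z1v z2v pm by auto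
        then show ?thesis using True unfolding \<sigma>_def by (simp add: algebra_simps)
      next
        case False then show ?thesis unfolding \<sigma>_def by auto
      qed
    qed
    have into: "\<sigma> b \<in> Fib zb" if b: "b \<in> Fib za" and za: "za \<in> {z1, z2}" and zb: "zb \<in> {z1, z2}" and zab: "za \<noteq> zb \<or> z1 = z2" for b za zb
    proof -
      have bB: "b \<in> Bf" "\<forall>i<N. \<forall>j<m. b w' i j = za (i, j)" using b unfolding Fib_def by auto
      have okv: "b w i j \<in> {-1, 1}" if "w \<in> {1..C}" "i < N" "j < m" for w i j
        using Bf_ok[OF bB(1)] that unfolding okb_def by auto
      have "\<sigma> b \<in> Bf"
        unfolding Bf_def okb_def
      proof (intro CollectI conjI ballI allI impI)
        fix w i j assume "w \<in> {1..C}" "i < N" "j < m"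
        note h = this
        have pm3: "a \<in> {-1, 1} \<Longrightarrow> b' \<in> {-1, 1} \<Longrightarrow> c' \<in> {-1, 1} \<Longrightarrow> a * b' * c' \<in> {-1::int, 1}" for a b' c'
          by auto
        show "\<sigma> b w i j \<in> {-1, 1}"
        proof (cases "w = w' \<and> i < N \<and> j < m")
          case True then show ?thesis unfolding \<sigma>_def using pm3[OF okv[OF h] z1v z2v] h by simp
        next
          case False then show ?thesis unfolding \<sigma>_def using okv[OF h] by auto
        qed
      next
        fix w i j assume "\<not> (w \<in> {1..C} \<and> i < N \<and> j < m)"
        then show "\<sigma> b w i j = 0" using bB(1) w'C unfolding \<sigma>_def Bf_def by auto
      qed
      moreover have "\<sigma> b w' i j = zb (i, j)" if "i < N" "j < m" for i j
      proof -
        have "z1 (i, j) * z1 (i, j) = 1" "z2 (i, j) * z2 (i, j) = 1" using z1v z2v pm that by auto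
        then show ?thesis using bB(2) that za zb zab unfolding \<sigma>_def by (auto simp: algebra_simps)
      qed
      ultimately show ?thesis unfolding Fib_def by auto
    qed
    have bij: "bij_betw \<sigma> (Fib z1) (Fib z2)"
    proof (cases "z1 = z2")
      case True
      show ?thesis
        by (rule bij_betw_byWitness[where f' = \<sigma>]) (use \<sigma>\<sigma> into True in auto)
    next
      case False
      show ?thesis
        by (rule bij_betw_byWitness[where f' = \<sigma>]) (use \<sigma>\<sigma> into[of _ z1 z2] into[of _ z2 z1] False in auto)
    qed
    have g: "\<sigma> b 1 = b 1" for b using w' unfolding \<sigma>_def by (auto simp: fun_eq_iff)
    show ?thesis
    proof -
      have "(\<Sum>b\<in>Fib z1. c * Gf (b 1) A) = (\<Sum>b\<in>Fib z1. c * Gf (\<sigma> b 1) A)"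
        by (simp only: g)
      also have "\<dots> = (\<Sum>b\<in>Fib z2. c * Gf (b 1) A)"
        by (rule sum.reindex_bij_betw[OF bij, of "\<lambda>b. c * Gf (b 1) A"])
      finally show ?thesis .
    qed
  qed
  define t where "t z = measure M (Ez z \<inter> Rect A)" for z
  have t_eq: "t z = enn2real (\<Sum>b\<in>Fib z. c * Gf (b 1) A)" for z
  proof -
    have "emeasure M (Ez z \<inter> Rect A) = emeasure M (Ez z \<inter> Rect A \<inter> Good)"
      by (rule emeasure_eq_AE) (use AEgood Ez_sets Rect_sets A Good_sets in auto)
    then show ?thesis unfolding t_def measure_def em_fib by simp
  qed
  have tconst: "t z1 = t z" if "z1 \<in> Zs" for z1
    using sym[OF that] z unfolding t_eq Zs_def by simp
  have disjE: "disjoint_family_on (\<lambda>z. Ez z \<inter> Rect A) Zs"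
    unfolding disjoint_family_on_def
  proof (intro ballI impI)
    fix z1 z2 assume zz: "z1 \<in> Zs" "z2 \<in> Zs" "z1 \<noteq> z2"
    then obtain k where k: "z1 k \<noteq> z2 k" by (auto simp: fun_eq_iff)
    then have "k \<in> {..<N} \<times> {..<m}" using zz unfolding Zs_def by (metis PiE_arb)
    then show "(Ez z1 \<inter> Rect A) \<inter> (Ez z2 \<inter> Rect A) = {}" using k unfolding Ez_def by force
  qed
  have finZs: "finite Zs" unfolding Zs_def by (auto intro: finite_PiE)
  have cardZs: "card Zs = 2 ^ (N * m)" unfolding Zs_def by (simp add: card_PiE card_cartesian_product numeral_2_eq_2)
  have "(\<Sum>z1\<in>Zs. t z1) = measure M (\<Union>z1\<in>Zs. Ez z1 \<inter> Rect A)"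
    unfolding t_def by (rule finite_measure_finite_Union[symmetric]) (use finZs disjE Ez_sets Rect_sets A in auto)
  also have "\<dots> = measure M (Rect A)"
  proof -
    have "AE x in M. x \<in> (\<Union>z1\<in>Zs. Ez z1 \<inter> Rect A) \<longleftrightarrow> x \<in> Rect A"
      using AEgood
    proof eventually_elim
      case (elim x)
      show ?case
      proof
        assume "x \<in> Rect A"
        moreover have "restrict (\<lambda>(i, j). Xn w' i j x) ({..<N} \<times> {..<m}) \<in> Zs"
        proof -
          have "\<forall>i<N. \<forall>j<m. Xn w' i j x \<in> {-1,1}" using elim w'C unfolding Good_def by blast
          then show ?thesis unfolding Zs_def by auto
        qed
        moreover have "x \<in> Ez (restrict (\<lambda>(i, j). Xn w' i j x) ({..<N} \<times> {..<m}))"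
          using elim unfolding Ez_def Good_def by auto
        ultimately show "x \<in> (\<Union>z1\<in>Zs. Ez z1 \<inter> Rect A)" by blast
      qed auto
    qed
    then have "emeasure M (\<Union>z1\<in>Zs. Ez z1 \<inter> Rect A) = emeasure M (Rect A)"
    proof (rule emeasure_eq_AE)
      show "(\<Union>z1\<in>Zs. Ez z1 \<inter> Rect A) \<in> sets M"
        using finZs Ez_sets Rect_sets[OF A] by (intro sets.finite_UN) auto
    qed (use Rect_sets[OF A] in auto)
    then show ?thesis unfolding measure_def by simp
  qed
  finally have "real (card Zs) * t z = measure M (Rect A)"
    using tconst by simp
  then have "t z = (1/2) ^ (N * m) * measure M (Rect A)"
    unfolding cardZs by (simp add: field_simps power_one_over)
  then show ?thesis unfolding t_def Ez_def Rect_def .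
qed




lemma sgnp_cond: "(sgnp t * z < 0) \<longleftrightarrow> ((0 \<le> t \<and> real_of_int z < 0) \<or> (t < 0 \<and> 0 < real_of_int z))"
  unfolding sgnp_def by auto

lemma rnk_sum: "real (rnk N m T i j) = (\<Sum>k\<in>{..<N} \<times> {..<m}. if lek T k (i, j) then 1 else 0)"
proof -
  have "real (rnk N m T i j) = (\<Sum>k\<in>{k \<in> {..<N} \<times> {..<m}. lek T k (i,j)}. 1)"
    unfolding rnk_eq by simp
  also have "\<dots> = (\<Sum>k\<in>{..<N} \<times> {..<m}. if lek T k (i, j) then 1 else 0)"
    by (rule sum.inter_filter) auto
  finally show ?thesis .
qed

lemma orb_meas:
  fixes T :: "nat \<Rightarrow> nat \<Rightarrow> 'a \<Rightarrow> real" and Z :: "nat \<Rightarrow> nat \<Rightarrow> 'a \<Rightarrow> int"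
  assumes Tm: "\<And>i j. i < N \<Longrightarrow> j < m \<Longrightarrow> T i j \<in> borel_measurable Q"
    and Zm: "\<And>i j. i < N \<Longrightarrow> j < m \<Longrightarrow> (\<lambda>x. real_of_int (Z i j x)) \<in> borel_measurable Q"
  shows "(\<lambda>x. orb_metric N m (\<lambda>i j. T i j x) (\<lambda>i j. Z i j x)) \<in> borel_measurable Q"
  unfolding orb_metric_K rnk_sum
proof (intro borel_measurable_sum)
  fix k assume k: "k \<in> {..<N} \<times> {..<m}"
  have [measurable]: "T (fst k) (snd k) \<in> borel_measurable Q" "(\<lambda>x. real_of_int (Z (fst k) (snd k) x)) \<in> borel_measurable Q"
    using k Tm Zm by auto
  have inner: "(\<lambda>x. \<Sum>k'\<in>{..<N} \<times> {..<m}. if lek (\<lambda>i j. T i j x) k' (fst k, snd k) then (1::real) else 0) \<in> borel_measurable Q"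
  proof (intro borel_measurable_sum)
    fix k' assume k': "k' \<in> {..<N} \<times> {..<m}"
    have [measurable]: "T (fst k') (snd k') \<in> borel_measurable Q" using k' Tm by auto
    show "(\<lambda>x. if lek (\<lambda>i j. T i j x) k' (fst k, snd k) then (1::real) else 0) \<in> borel_measurable Q"
      unfolding lek_def fst_conv snd_conv by measurable
  qed
  show "(\<lambda>x. 1 / (real m * real N) * ((\<Sum>k'\<in>{..<N} \<times> {..<m}. if lek (\<lambda>i j. T i j x) k' (fst k, snd k) then 1 else 0) / (real m * real N) *
          (if sgnp (T (fst k) (snd k) x) * Z (fst k) (snd k) x < 0 then 1 else 0))) \<in> borel_measurable Q"
    unfolding sgnp_cond using inner by measurable
qed

lemma cond_exp_const:
  fixes M :: "'a measure" and Xn :: "nat \<Rightarrow> nat \<Rightarrow> nat \<Rightarrow> 'a \<Rightarrow> int"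
    and Yn :: "nat \<Rightarrow> 'a \<Rightarrow> 'y::euclidean_space"
    and Gf :: "(nat \<Rightarrow> nat \<Rightarrow> int) \<Rightarrow> (nat \<Rightarrow> 'y set) \<Rightarrow> ennreal"
    and L :: "nat \<Rightarrow> 'y \<Rightarrow> real"
  assumes prob: "prob_space M"
    and Xm: "\<And>w i j. Xn w i j \<in> measurable M (count_space UNIV)"
    and Ym: "\<And>i. Yn i \<in> borel_measurable M"
    and Lm: "\<And>j. L j \<in> borel_measurable borel"
    and law: "\<And>b A. (\<forall>w\<in>{1..C}. \<forall>i<N. \<forall>j<m. b w i j \<in> {-1, 1}) \<Longrightarrow>
               (\<forall>i<N. A i \<in> sets lborel) \<Longrightarrow>
               emeasure M {x \<in> space M. (\<forall>w\<in>{1..C}. \<forall>i<N. \<forall>j<m. Xn w i j x = b w i j)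
                                       \<and> (\<forall>i<N. Yn i x \<in> A i)}
               = ennreal ((1/2) ^ (C * N * m)) * Gf (b 1) A"
    and Gone: "\<And>b1. (\<forall>i<N. \<forall>j<m. b1 i j \<in> {-1, 1}) \<Longrightarrow> Gf b1 (\<lambda>_. UNIV) = 1"
    and w': "1 \<le> w'" "w' \<le> C" "w' \<noteq> 1"
    and N: "N > 0" and m: "m > 0" and theta: "\<theta> \<le> 0"
  shows "AE x in M. real_cond_exp M (Tsigma M N m Yn L)
            (\<lambda>x. exp (real N * \<theta> * orb_metric N m (\<lambda>i j. L j (Yn i x)) (\<lambda>i j. Xn w' i j x))) x
         = (1/2) ^ (N * m) * (\<Prod>r\<in>{1..m*N}. (1 + exp (\<theta> * real r / (real m * (real m * real N)))))"
proof -
  interpret prob_space M by (rule prob)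
  define Rect where "Rect B = {x\<in>space M. \<forall>i<N. Yn i x \<in> B i}" for B
  define Rects where "Rects = {Rect B | B. \<forall>i<N. B i \<in> sets lborel}"
  define G where "G = sigma (space M) Rects"
  define F where "F = Tsigma M N m Yn L"
  define Ez where "Ez z = {x\<in>space M. \<forall>i<N. \<forall>j<m. Xn w' i j x = z (i, j)}" for z :: "nat \<times> nat \<Rightarrow> int"
  define Zs where "Zs = PiE ({..<N} \<times> {..<m}) (\<lambda>_. {-1::int, 1})"
  define q where "q = (1/2::real) ^ (N * m)"
  have Yset: "{x\<in>space M. Yn i x \<in> B} \<in> sets M" if "B \<in> sets lborel" for i B
  proof -
    have "{x\<in>space M. Yn i x \<in> B} = Yn i -` B \<inter> space M" by auto
    then show ?thesis using measurable_sets[OF Ym, of B] that by simp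
  qed
  have Rect_sets: "Rect B \<in> sets M" if "\<forall>i<N. B i \<in> sets lborel" for B
    unfolding Rect_def by (rule sets_Collect_lessThan_All) (use Yset that in auto)
  have Xone: "{x\<in>space M. P (Xn w i j x)} \<in> sets M" for P w i j
  proof -
    have "{x\<in>space M. P (Xn w i j x)} = Xn w i j -` {v. P v} \<inter> space M" by auto
    then show ?thesis using measurable_sets[OF Xm, of "{v. P v}"] by simp
  qed
  have Ez_sets: "Ez z \<in> sets M" for z
    unfolding Ez_def by (intro sets_Collect_lessThan_All Xone)
  have RectsM: "Rects \<subseteq> sets M" unfolding Rects_def using Rect_sets by auto
  have RectsP: "Rects \<subseteq> Pow (space M)" unfolding Rects_def Rect_def by auto
  have setsG: "sets G = sigma_sets (space M) Rects" unfolding G_def using RectsP by (rule sets_measure_of)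
  have spaceG: "space G = space M" unfolding G_def using RectsP by (rule space_measure_of)
  have GM: "sets G \<subseteq> sets M" unfolding setsG using RectsM by (rule sets.sigma_sets_subset)
  have subG: "subalgebra M G" unfolding subalgebra_def using spaceG GM by auto
  have subGd: "subalgebra (density M g) G" for g unfolding subalgebra_def using spaceG GM by auto
  have RectsG: "Rect B \<in> sets G" if "\<forall>i<N. B i \<in> sets lborel" for B
    unfolding setsG Rects_def using that by (auto intro: sigma_sets.Basic)
  define GenF where "GenF = (\<Union>i\<in>{..<N}. \<Union>j\<in>{..<m}. {(\<lambda>x. L j (Yn i x)) -` A \<inter> space M | A. A \<in> sets borel})"
  have GenF_sub: "GenF \<subseteq> Rects"
  proof
    fix X assume "X \<in> GenF"
    then obtain i j A where ij: "i < N" "j < m" "A \<in> sets borel" and X: "X = (\<lambda>x. L j (Yn i x)) -` A \<inter> space M"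
      unfolding GenF_def by blast
    have LA: "L j -` A \<in> sets lborel" using measurable_sets[OF Lm ij(3)] by simp
    have "X = Rect (\<lambda>k. if k = i then L j -` A else UNIV)" unfolding X Rect_def using ij by auto
    moreover have "\<forall>k<N. (\<lambda>k. if k = i then L j -` A else UNIV) k \<in> sets lborel" using LA by auto
    ultimately show "X \<in> Rects" unfolding Rects_def by blast
  qed
  have GenFP: "GenF \<subseteq> Pow (space M)" using GenF_sub RectsP by auto
  have setsF: "sets F = sigma_sets (space M) GenF"
    unfolding F_def Tsigma_def GenF_def[symmetric] using GenFP by (rule sets_measure_of)
  have spaceF: "space F = space M"
    unfolding F_def Tsigma_def GenF_def[symmetric] using GenFP by (rule space_measure_of)
  have FG: "sets F \<subseteq> sets G" unfolding setsF setsG by (rule sigma_sets_mono'[OF GenF_sub])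
  have subF: "subalgebra M F" unfolding subalgebra_def using spaceF FG GM by auto
  have key: "(\<integral>x. h x * indicator (Ez z) x \<partial>M) = q * (\<integral>x. h x \<partial>M)"
    if z: "z \<in> Zs" and hm: "h \<in> borel_measurable G" and hpos: "\<And>x. 0 \<le> h x" for z h
  proof -
    have eqm: "restr_to_subalg (density M (indicator (Ez z))) G = restr_to_subalg (density M (\<lambda>_. ennreal q)) G"
    proof (rule measure_eqI_generator_eq[where E = Rects and \<Omega> = "space M" and A = "\<lambda>_. space M"])
      show "Int_stable Rects"
        unfolding Int_stable_def
      proof (intro ballI)
        fix X Y assume "X \<in> Rects" "Y \<in> Rects"
        then obtain B B' where B: "\<forall>i<N. B i \<in> sets lborel" "X = Rect B" and B': "\<forall>i<N. B' i \<in> sets lborel" "Y = Rect B'"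
          unfolding Rects_def by blast
        have "X \<inter> Y = Rect (\<lambda>i. B i \<inter> B' i)" unfolding B B' Rect_def by auto
        moreover have "\<forall>i<N. B i \<inter> B' i \<in> sets lborel" using B B' by auto
        ultimately show "X \<inter> Y \<in> Rects" unfolding Rects_def by blast
      qed
      show "Rects \<subseteq> Pow (space M)" by (rule RectsP)
      show "sets (restr_to_subalg (density M (indicator (Ez z))) G) = sigma_sets (space M) Rects"
        using sets_restr_to_subalg[OF subGd] setsG by simp
      show "sets (restr_to_subalg (density M (\<lambda>_. ennreal q)) G) = sigma_sets (space M) Rects"
        using sets_restr_to_subalg[OF subGd] setsG by simp
      have spR: "space M = Rect (\<lambda>_. UNIV)" unfolding Rect_def by auto
      show "range (\<lambda>_. space M) \<subseteq> Rects" unfolding Rects_def using spR by auto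
      show "(\<Union>i::nat. space M) = space M" by simp
      fix X assume X: "X \<in> Rects"
      then obtain B where B: "\<forall>i<N. B i \<in> sets lborel" "X = Rect B" unfolding Rects_def by blast
      have XG: "X \<in> sets G" using RectsG B by simp
      have XM: "X \<in> sets M" using Rect_sets B by simp
      have "emeasure (restr_to_subalg (density M (indicator (Ez z))) G) X = emeasure (density M (indicator (Ez z))) X"
        by (rule emeasure_restr_to_subalg[OF subGd XG])
      also have "\<dots> = (\<integral>\<^sup>+ x. indicator (Ez z) x * indicator X x \<partial>M)"
        by (rule emeasure_density) (use Ez_sets XM in auto)
      also have "\<dots> = (\<integral>\<^sup>+ x. indicator (Ez z \<inter> X) x \<partial>M)"
        by (intro nn_integral_cong) (auto split: split_indicator)
      also have "\<dots> = emeasure M (Ez z \<inter> X)" using Ez_sets XM by simp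
      also have "\<dots> = ennreal (q * measure M X)"
      proof -
        have "measure M (Ez z \<inter> X) = q * measure M X"
          unfolding Ez_def B(2) Rect_def q_def
          by (rule rect_indep[OF prob Xm Ym law Gone w' _ B(1)]) (use z Zs_def in auto)
        then show ?thesis by (simp add: emeasure_eq_measure)
      qed
      also have "\<dots> = (\<integral>\<^sup>+ x. ennreal q * indicator X x \<partial>M)"
        using XM by (subst nn_integral_cmult_indicator[OF XM]) (simp add: emeasure_eq_measure ennreal_mult q_def)
      also have "\<dots> = emeasure (density M (\<lambda>_. ennreal q)) X"
        by (rule emeasure_density[symmetric]) (use XM in auto)
      also have "\<dots> = emeasure (restr_to_subalg (density M (\<lambda>_. ennreal q)) G) X"
        by (rule emeasure_restr_to_subalg[OF subGd XG, symmetric])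
      finally show "emeasure (restr_to_subalg (density M (indicator (Ez z))) G) X = emeasure (restr_to_subalg (density M (\<lambda>_. ennreal q)) G) X" .
    next
      fix i :: nat
      have "emeasure (restr_to_subalg (density M (indicator (Ez z))) G) (space M) = emeasure (density M (indicator (Ez z))) (space M)"
        by (rule emeasure_restr_to_subalg[OF subGd]) (metis sets.top spaceG)
      also have "\<dots> = (\<integral>\<^sup>+ x. indicator (Ez z) x * indicator (space M) x \<partial>M)"
        by (rule emeasure_density) (use Ez_sets in auto)
      also have "\<dots> \<le> (\<integral>\<^sup>+ x. 1 \<partial>M)"
        by (intro nn_integral_mono) (auto split: split_indicator)
      also have "\<dots> < \<infinity>" by (simp add: emeasure_space_1)
      finally show "emeasure (restr_to_subalg (density M (indicator (Ez z))) G) (space M) \<noteq> \<infinity>" by simp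
    qed
    have hM: "h \<in> borel_measurable M" by (rule measurable_from_subalg[OF subG hm])
    have "(\<integral>\<^sup>+ x. ennreal (h x * indicator (Ez z) x) \<partial>M) = (\<integral>\<^sup>+ x. indicator (Ez z) x * ennreal (h x) \<partial>M)"
      by (intro nn_integral_cong) (auto split: split_indicator)
    also have "\<dots> = (\<integral>\<^sup>+ x. ennreal (h x) \<partial>density M (indicator (Ez z)))"
      by (rule nn_integral_density[symmetric]) (use Ez_sets hM in auto)
    also have "\<dots> = (\<integral>\<^sup>+ x. ennreal (h x) \<partial>restr_to_subalg (density M (indicator (Ez z))) G)"
      by (rule nn_integral_subalgebra2[OF subGd, symmetric]) (use hm in auto)
    also have "\<dots> = (\<integral>\<^sup>+ x. ennreal (h x) \<partial>restr_to_subalg (density M (\<lambda>_. ennreal q)) G)"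
      unfolding eqm ..
    also have "\<dots> = (\<integral>\<^sup>+ x. ennreal (h x) \<partial>density M (\<lambda>_. ennreal q))"
      by (rule nn_integral_subalgebra2[OF subGd]) (use hm in auto)
    also have "\<dots> = (\<integral>\<^sup>+ x. ennreal q * ennreal (h x) \<partial>M)"
      by (rule nn_integral_density) (use hM in auto)
    also have "\<dots> = ennreal q * (\<integral>\<^sup>+ x. ennreal (h x) \<partial>M)"
      by (rule nn_integral_cmult) (use hM in auto)
    finally have nn: "(\<integral>\<^sup>+ x. ennreal (h x * indicator (Ez z) x) \<partial>M) = ennreal q * (\<integral>\<^sup>+ x. ennreal (h x) \<partial>M)" .
    have "(\<integral>x. h x * indicator (Ez z) x \<partial>M) = enn2real (\<integral>\<^sup>+ x. ennreal (h x * indicator (Ez z) x) \<partial>M)"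
      by (rule integral_eq_nn_integral) (use hM Ez_sets hpos in auto)
    also have "\<dots> = q * enn2real (\<integral>\<^sup>+ x. ennreal (h x) \<partial>M)"
      unfolding nn by (simp add: enn2real_mult q_def)
    also have "enn2real (\<integral>\<^sup>+ x. ennreal (h x) \<partial>M) = (\<integral>x. h x \<partial>M)"
      by (rule integral_eq_nn_integral[symmetric]) (use hM hpos in auto)
    finally show ?thesis .
  qed
  have orb_nn: "0 \<le> orb_metric N m T Z" for T Z
    unfolding orb_metric_def by (intro mult_nonneg_nonneg sum_nonneg) auto
  have expb: "0 < exp (real N * \<theta> * t) \<and> exp (real N * \<theta> * t) \<le> 1" if "0 \<le> t" for t
  proof -
    have "real N * \<theta> \<le> 0" using theta by (simp add: mult_nonneg_nonpos)
    then have "real N * \<theta> * t \<le> 0" using that by (simp add: mult_nonpos_nonneg)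
    then show ?thesis by simp
  qed
  define f where "f x = exp (real N * \<theta> * orb_metric N m (\<lambda>i j. L j (Yn i x)) (\<lambda>i j. Xn w' i j x))" for x
  define \<phi> where "\<phi> z x = exp (real N * \<theta> * orb_metric N m (\<lambda>i j. L j (Yn i x)) (\<lambda>i j. z (i, j)))"
    for z :: "nat \<times> nat \<Rightarrow> int" and x
  define P where "P = (\<Prod>r\<in>{1..m*N}. (1 + exp (\<theta> * real r / (real m * (real m * real N)))))"
  have fb: "0 < f x \<and> f x \<le> 1" for x unfolding f_def by (rule expb[OF orb_nn])
  have \<phi>b: "0 < \<phi> z x \<and> \<phi> z x \<le> 1" for z x unfolding \<phi>_def by (rule expb[OF orb_nn])
  have LYM: "(\<lambda>x. L j (Yn i x)) \<in> borel_measurable M" for i j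
    by (rule measurable_compose[OF Ym Lm])
  have XrM: "(\<lambda>x. real_of_int (Xn w i j x)) \<in> borel_measurable M" for w i j
    by (rule measurable_compose[OF Xm borel_measurable_count_space])
  have fM: "f \<in> borel_measurable M"
  proof -
    have [measurable]: "(\<lambda>x. orb_metric N m (\<lambda>i j. L j (Yn i x)) (\<lambda>i j. Xn w' i j x)) \<in> borel_measurable M"
      by (rule orb_meas) (use LYM XrM in auto)
    show ?thesis unfolding f_def by measurable
  qed
  have YG: "Yn i \<in> borel_measurable G" if "i < N" for i
  proof (rule measurableI)
    fix B :: "'y set" assume "B \<in> sets borel"
    then have "\<forall>k<N. (\<lambda>k. if k = i then B else UNIV) k \<in> sets lborel" by auto
    then have "Rect (\<lambda>k. if k = i then B else UNIV) \<in> sets G" by (rule RectsG)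
    moreover have "Rect (\<lambda>k. if k = i then B else UNIV) = Yn i -` B \<inter> space G"
      unfolding Rect_def spaceG using that by auto
    ultimately show "Yn i -` B \<inter> space G \<in> sets G" by simp
  qed simp
  have \<phi>G: "\<phi> z \<in> borel_measurable G" for z
  proof -
    have [measurable]: "(\<lambda>x. orb_metric N m (\<lambda>i j. L j (Yn i x)) (\<lambda>i j. z (i, j))) \<in> borel_measurable G"
      by (rule orb_meas) (use measurable_compose[OF YG Lm] in auto)
    show ?thesis unfolding \<phi>_def by measurable
  qed
  have \<phi>M: "\<phi> z \<in> borel_measurable M" for z by (rule measurable_from_subalg[OF subG \<phi>G])
  have finZs: "finite Zs" unfolding Zs_def by (auto intro: finite_PiE)
  have cardZs: "card Zs = 2 ^ (N * m)" unfolding Zs_def by (simp add: card_PiE card_cartesian_product numeral_2_eq_2)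
  have Ez_uniq: "z1 = z2" if "z1 \<in> Zs" "z2 \<in> Zs" "x \<in> Ez z1" "x \<in> Ez z2" for z1 z2 x
  proof
    fix k show "z1 k = z2 k"
    proof (cases "k \<in> {..<N} \<times> {..<m}")
      case True then show ?thesis using that unfolding Ez_def by force
    next
      case False then show ?thesis using that unfolding Zs_def by (metis PiE_arb)
    qed
  qed
  have disjE: "disjoint_family_on Ez Zs"
    unfolding disjoint_family_on_def using Ez_uniq by blast
  have mEz: "measure M (Ez z) = q" if "z \<in> Zs" for z
  proof -
    have "measure M ({x\<in>space M. \<forall>i<N. \<forall>j<m. Xn w' i j x = z (i, j)} \<inter> {x\<in>space M. \<forall>i<N. Yn i x \<in> UNIV})
         = (1/2) ^ (N * m) * measure M {x\<in>space M. \<forall>i<N. Yn i x \<in> UNIV}"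
      by (rule rect_indep[OF prob Xm Ym law Gone w']) (use that Zs_def in auto)
    moreover have "{x\<in>space M. \<forall>i<N. Yn i x \<in> (UNIV :: 'y set)} = space M" by auto
    ultimately show ?thesis unfolding Ez_def q_def by (simp add: Int_absorb2 prob_space)
  qed
  have "prob (\<Union>z\<in>Zs. Ez z) = (\<Sum>z\<in>Zs. prob (Ez z))"
    by (rule finite_measure_finite_Union) (use finZs disjE Ez_sets in auto)
  also have "\<dots> = 1" using mEz cardZs by (simp add: q_def power_one_over)
  finally have AEcov: "AE x in M. x \<in> (\<Union>z\<in>Zs. Ez z)" by (rule AE_prob_1)
  have f_eq: "f x = \<phi> z x" if "x \<in> Ez z" for x z
    unfolding f_def \<phi>_def using that unfolding Ez_def
    by (intro arg_cong[where f = exp] arg_cong[where f = "\<lambda>t. real N * \<theta> * t"] orb_metric_cong) auto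
  have sumP: "(\<Sum>z\<in>Zs. \<phi> z x) = P" for x
    unfolding \<phi>_def P_def Zs_def by (rule sumZ[OF N m])
  have main: "(\<integral>x\<in>A. f x \<partial>M) = (\<integral>x\<in>A. q * P \<partial>M)" if A: "A \<in> sets F" for A
  proof -
    have AG: "A \<in> sets G" using A FG by auto
    have AM: "A \<in> sets M" using AG GM by auto
    have hG: "(\<lambda>x. indicator A x * \<phi> z x) \<in> borel_measurable G" for z
      using AG \<phi>G by measurable
    have hM: "(\<lambda>x. indicator A x * \<phi> z x) \<in> borel_measurable M" for z
      by (rule measurable_from_subalg[OF subG hG])
    have intg: "integrable M (\<lambda>x. indicator A x * \<phi> z x * indicator (Ez z') x)" for z z'
    proof (rule integrable_const_bound[where B = 1])
      show "AE x in M. norm (indicator A x * \<phi> z x * indicator (Ez z') x) \<le> 1"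
        using \<phi>b by (auto split: split_indicator simp: abs_le_iff less_imp_le)
      show "(\<lambda>x. indicator A x * \<phi> z x * indicator (Ez z') x) \<in> borel_measurable M"
        using hM Ez_sets by measurable
    qed
    have intg2: "integrable M (\<lambda>x. indicator A x * \<phi> z x)" for z
    proof (rule integrable_const_bound[where B = 1])
      show "AE x in M. norm (indicator A x * \<phi> z x) \<le> 1"
        using \<phi>b by (auto split: split_indicator simp: abs_le_iff less_imp_le)
    qed (rule hM)
    have "(\<integral>x\<in>A. f x \<partial>M) = (\<integral>x. indicator A x * f x \<partial>M)"
      by (simp add: set_lebesgue_integral_def)
    also have "\<dots> = (\<integral>x. (\<Sum>z\<in>Zs. indicator A x * \<phi> z x * indicator (Ez z) x) \<partial>M)"
    proof (rule integral_cong_AE)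
      show "(\<lambda>x. indicator A x * f x) \<in> borel_measurable M" using AM fM by measurable
      show "(\<lambda>x. \<Sum>z\<in>Zs. indicator A x * \<phi> z x * indicator (Ez z) x) \<in> borel_measurable M"
        using intg by (intro borel_measurable_sum) auto
      show "AE x in M. indicator A x * f x = (\<Sum>z\<in>Zs. indicator A x * \<phi> z x * indicator (Ez z) x)"
        using AEcov
      proof eventually_elim
        case (elim x)
        then obtain z0 where z0: "z0 \<in> Zs" "x \<in> Ez z0" by blast
        have "(\<Sum>z\<in>Zs. indicator A x * \<phi> z x * indicator (Ez z) x)
            = (\<Sum>z\<in>Zs. if z = z0 then indicator A x * \<phi> z0 x else 0)"
          by (intro sum.cong refl) (use z0 Ez_uniq in \<open>auto split: split_indicator\<close>)
        also have "\<dots> = indicator A x * \<phi> z0 x" using z0 finZs by simp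
        finally show ?case using f_eq[OF z0(2)] by simp
      qed
    qed
    also have "\<dots> = (\<Sum>z\<in>Zs. (\<integral>x. indicator A x * \<phi> z x * indicator (Ez z) x \<partial>M))"
      by (rule Bochner_Integration.integral_sum) (rule intg)
    also have "\<dots> = (\<Sum>z\<in>Zs. q * (\<integral>x. indicator A x * \<phi> z x \<partial>M))"
    proof (intro sum.cong refl)
      fix z assume z: "z \<in> Zs"
      show "(\<integral>x. indicator A x * \<phi> z x * indicator (Ez z) x \<partial>M) = q * (\<integral>x. indicator A x * \<phi> z x \<partial>M)"
        by (rule key[OF z hG]) (use \<phi>b in \<open>auto split: split_indicator simp: less_imp_le\<close>)
    qed
    also have "\<dots> = (\<integral>x. (\<Sum>z\<in>Zs. q * (indicator A x * \<phi> z x)) \<partial>M)"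
      by (subst Bochner_Integration.integral_sum) (use intg2 in auto)
    also have "\<dots> = (\<integral>x. indicator A x * (q * P) \<partial>M)"
    proof (intro Bochner_Integration.integral_cong refl)
      fix x
      have "(\<Sum>z\<in>Zs. q * (indicator A x * \<phi> z x)) = q * indicator A x * (\<Sum>z\<in>Zs. \<phi> z x)"
        by (simp add: sum_distrib_left mult.assoc)
      then show "(\<Sum>z\<in>Zs. q * (indicator A x * \<phi> z x)) = indicator A x * (q * P)"
        unfolding sumP by simp
    qed
    also have "\<dots> = (\<integral>x\<in>A. q * P \<partial>M)"
      by (simp add: set_lebesgue_integral_def)
    finally show ?thesis .
  qed
  have sfs: "sigma_finite_subalgebra M F"
    by (rule finite_measure_subalgebra_is_sigma_finite)
       (simp add: finite_measure_subalgebra_def finite_measure_subalgebra_axioms_def subF finite_measure_axioms)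
  have fint: "integrable M f"
    by (rule integrable_const_bound[where B = 1]) (use fb fM in \<open>auto simp: less_imp_le\<close>)
  have "AE x in M. real_cond_exp M F f x = q * P"
    by (rule sigma_finite_subalgebra.real_cond_exp_charact[OF sfs main fint]) auto
  then show ?thesis unfolding F_def f_def q_def P_def .
qed



theorem lemma9:
  fixes M :: "'a measure"
    and S :: "'s set" and \<mu> :: "int list \<Rightarrow> 's" and m :: nat
    and p :: "'s \<Rightarrow> real^'d \<Rightarrow> real"
    and R :: real and \<theta> :: real and w' :: nat
    and X :: "nat \<Rightarrow> nat \<Rightarrow> nat \<Rightarrow> nat \<Rightarrow> 'a \<Rightarrow> int"
    and Y :: "nat \<Rightarrow> nat \<Rightarrow> 'a \<Rightarrow> real^'d"
  assumes m: "m \<ge> 1"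
    and S: "finite S" "card S = 2 ^ m"
    and mu: "bij_betw \<mu> (bitvecs m) S"
    and dens: "\<And>s. s \<in> S \<Longrightarrow> p s \<in> borel_measurable lborel"
              "\<And>s y. s \<in> S \<Longrightarrow> 0 \<le> p s y"
              "\<And>s. s \<in> S \<Longrightarrow> (\<integral>\<^sup>+ y. ennreal (p s y) \<partial>lborel) = 1"
    and A1: "\<And>j. j < m \<Longrightarrow> \<exists>M1>0. \<exists>a>0. \<exists>S1::real poly. \<forall>y. norm y > M1 \<longrightarrow>
               (\<forall>b\<in>{-1,1}. qfun S \<mu> m p j b y < poly S1 (norm y) * exp (- a * norm y))"
    and A2: "\<And>j. j < m \<Longrightarrow> \<exists>M2>0. \<exists>S2::real poly. \<forall>y. norm y > M2 \<longrightarrow>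
               \<bar>llr S \<mu> m p j y\<bar> < poly S2 (norm y)"
    and A3: "\<And>j. j < m \<Longrightarrow> smooth_cdf (Psi S \<mu> m p j)"
            "smooth_cdf (Psibar S \<mu> m p)"
    and prob: "prob_space M"
    and Xmeas: "\<And>N w i j. X N w i j \<in> measurable M (count_space UNIV)"
    and Ymeas: "\<And>N i. Y N i \<in> borel_measurable M"
    and law: "\<And>N b A. (\<forall>w\<in>{1..csize R N}. \<forall>i<N. \<forall>j<m. b w i j \<in> {-1, 1}) \<Longrightarrow>
               (\<forall>i<N. A i \<in> sets lborel) \<Longrightarrow>
               emeasure M {x \<in> space M. (\<forall>w\<in>{1..csize R N}. \<forall>i<N. \<forall>j<m. X N w i j x = b w i j)
                                       \<and> (\<forall>i<N. Y N i x \<in> A i)}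
               = ennreal ((1/2) ^ (csize R N * N * m)) *
                 (\<Prod>i<N. \<integral>\<^sup>+ y \<in> A i. ennreal (p (\<mu> (map (b 1 i) [0..<m])) y) \<partial>lborel)"
    and R: "R > 0"
    and w': "w' \<ge> 1" "w' \<noteq> 1"
    and theta: "\<theta> < 0"
  shows "AE x in M.
    (\<lambda>N. ln (real_cond_exp M (Tsigma M N m (Y N) (llr S \<mu> m p))
              (\<lambda>x. exp (real N * \<theta> *
                 orb_metric N m (\<lambda>i j. llr S \<mu> m p j (Y N i x)) (\<lambda>i j. X N w' i j x))) x) / real N)
    \<longlonglongrightarrow> real m * integral {0..1} (\<lambda>t. ln (1 + exp (\<theta> / real m * t))) - real m * ln 2"
proof -
  interpret prob_space M by (rule prob)
  have m0: "m > 0" using m by simp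
  have Lm: "llr S \<mu> m p j \<in> borel_measurable borel" for j
  proof -
    have pb: "p s \<in> borel_measurable borel" if "s \<in> S" for s using dens(1)[OF that] by simp
    have q: "qfun S \<mu> m p j b \<in> borel_measurable borel" for b
      unfolding qfun_def[abs_def]
      by (intro borel_measurable_times borel_measurable_const borel_measurable_sum) (use pb in auto)
    show ?thesis unfolding llr_def[abs_def] using q by measurable
  qed
  define N0 where "N0 = Suc (nat \<lceil>real w' / R\<rceil>)"
  have bigN: "0 < N \<and> w' \<le> csize R N" if "N \<ge> N0" for N
  proof
    show "0 < N" using that unfolding N0_def by simp
    have "real w' / R \<le> real N" using that unfolding N0_def by linarith
    then have "real w' \<le> real N * R" using R by (simp add: field_simps)
    also have "\<dots> \<le> exp (real N * R)" using exp_ge_add_one_self[of "real N * R"] by linarith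
    also have "\<dots> \<le> real (csize R N)" unfolding csize_def
    proof -
      have "0 < exp (real N * R)" by simp
      then have "-1 < exp (real N * R)" by linarith
      then have "0 \<le> \<lceil>exp (real N * R)\<rceil>" by simp
      then have "real (nat \<lceil>exp (real N * R)\<rceil>) = real_of_int \<lceil>exp (real N * R)\<rceil>" by simp
      then show "exp (real N * R) \<le> real (nat \<lceil>exp (real N * R)\<rceil>)" by linarith
    qed
    finally show "w' \<le> csize R N" by simp
  qed
  define Gf where "Gf N b1 A = (\<Prod>i<N. \<integral>\<^sup>+ y \<in> A i. ennreal (p (\<mu> (map (b1 i) [0..<m])) y) \<partial>lborel)"
    for N :: nat and b1 :: "nat \<Rightarrow> nat \<Rightarrow> int" and A :: "nat \<Rightarrow> (real^'d) set"
  have Gone: "Gf N b1 (\<lambda>_. UNIV) = 1" if b1: "\<forall>i<N. \<forall>j<m. b1 i j \<in> {-1, 1}" for N b1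
    unfolding Gf_def
  proof (intro prod.neutral ballI)
    fix i assume "i \<in> {..<N}"
    then have "\<forall>j<m. b1 i j \<in> {-1, 1}" using b1 by simp
    then have "map (b1 i) [0..<m] \<in> bitvecs m" unfolding bitvecs_def by auto
    then have "\<mu> (map (b1 i) [0..<m]) \<in> S" by (rule bij_betw_apply[OF mu])
    then show "(\<integral>\<^sup>+ y \<in> UNIV. ennreal (p (\<mu> (map (b1 i) [0..<m])) y) \<partial>lborel) = 1"
      using dens(3) by simp
  qed
  define cst where "cst N = (1/2) ^ (N * m) * (\<Prod>r\<in>{1..m*N}. (1 + exp (\<theta> * real r / (real m * (real m * real N)))))"
    for N :: nat
  have AEN: "AE x in M. N \<ge> N0 \<longrightarrow> real_cond_exp M (Tsigma M N m (Y N) (llr S \<mu> m p))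
              (\<lambda>x. exp (real N * \<theta> *
                 orb_metric N m (\<lambda>i j. llr S \<mu> m p j (Y N i x)) (\<lambda>i j. X N w' i j x))) x = cst N" for N
  proof (cases "N \<ge> N0")
    case True
    then have NN: "0 < N" "w' \<le> csize R N" using bigN by auto
    have "AE x in M. real_cond_exp M (Tsigma M N m (Y N) (llr S \<mu> m p))
              (\<lambda>x. exp (real N * \<theta> *
                 orb_metric N m (\<lambda>i j. llr S \<mu> m p j (Y N i x)) (\<lambda>i j. X N w' i j x))) x = cst N"
      unfolding cst_def
    proof (rule cond_exp_const[where Gf = "Gf N" and C = "csize R N"])
      show "prob_space M" by (rule prob)
      show "\<And>w i j. X N w i j \<in> measurable M (count_space UNIV)" by (rule Xmeas)
      show "\<And>i. Y N i \<in> borel_measurable M" by (rule Ymeas)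
      show "\<And>j. llr S \<mu> m p j \<in> borel_measurable borel" by (rule Lm)
      show "\<And>b A. (\<forall>w\<in>{1..csize R N}. \<forall>i<N. \<forall>j<m. b w i j \<in> {-1, 1}) \<Longrightarrow>
               (\<forall>i<N. A i \<in> sets lborel) \<Longrightarrow>
               emeasure M {x \<in> space M. (\<forall>w\<in>{1..csize R N}. \<forall>i<N. \<forall>j<m. X N w i j x = b w i j)
                                       \<and> (\<forall>i<N. Y N i x \<in> A i)}
               = ennreal ((1/2) ^ (csize R N * N * m)) * Gf N (b 1) A"
        unfolding Gf_def by (rule law)
      show "\<And>b1. (\<forall>i<N. \<forall>j<m. b1 i j \<in> {-1, 1}) \<Longrightarrow> Gf N b1 (\<lambda>_. UNIV) = 1" by (rule Gone)
    qed (use w' NN m0 theta in simp_all)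
    then show ?thesis by (rule AE_mp) auto
  qed simp
  have "AE x in M. \<forall>N. N \<ge> N0 \<longrightarrow> real_cond_exp M (Tsigma M N m (Y N) (llr S \<mu> m p))
              (\<lambda>x. exp (real N * \<theta> *
                 orb_metric N m (\<lambda>i j. llr S \<mu> m p j (Y N i x)) (\<lambda>i j. X N w' i j x))) x = cst N"
    using AEN by (simp add: AE_all_countable)
  then show ?thesis
  proof (rule AE_mp[OF _ AE_I2], intro impI)
    fix x assume H: "\<forall>N. N \<ge> N0 \<longrightarrow> real_cond_exp M (Tsigma M N m (Y N) (llr S \<mu> m p))
              (\<lambda>x. exp (real N * \<theta> *
                 orb_metric N m (\<lambda>i j. llr S \<mu> m p j (Y N i x)) (\<lambda>i j. X N w' i j x))) x = cst N"
    have lim: "(\<lambda>N. ln (cst N) / real N) \<longlonglongrightarrow> real m * integral {0..1} (\<lambda>t. ln (1 + exp (\<theta> / real m * t))) - real m * ln 2"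
      unfolding cst_def by (rule const_lim[OF m0]) (use theta in simp)
    show "(\<lambda>N. ln (real_cond_exp M (Tsigma M N m (Y N) (llr S \<mu> m p))
              (\<lambda>x. exp (real N * \<theta> *
                 orb_metric N m (\<lambda>i j. llr S \<mu> m p j (Y N i x)) (\<lambda>i j. X N w' i j x))) x) / real N)
    \<longlonglongrightarrow> real m * integral {0..1} (\<lambda>t. ln (1 + exp (\<theta> / real m * t))) - real m * ln 2"
      by (rule Lim_transform_eventually[OF lim]) (unfold eventually_sequentially, rule exI[of _ N0], use H in simp)
  qed
qed



end
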